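(* Let $\mathcal{G}\subseteq\mathcal{F}$ be a sub-$\sigma$-field and let $X\in L^\infty$ be independent of $\mathcal{G}$. Then $\mathbb{E}[X\mid\mathcal{G}]$ is exactly the set of random variables $Y\in L^\infty(\mathcal{G})$ that take values (a.s.) in the ball $\mathbb{E}[X]$.
   Context: $\mathbb{K}$ is a local field with non-archimedean absolute value $|\cdot|$ satisfying $|x|=0 \iff x=0$, $|xy|=|x||y|$, $|x+y|\le|x|\vee|y|$. $(\Omega,\mathcal{F},\mathbb{P})$ is a probability space; $L^\infty$ is the space of $\mathbb{K}$-valued random variables $X$ with $\|X\|_\infty:=\operatorname{ess\,sup}|X|<\infty$; $L^\infty(\mathcal{G})$ its $\mathcal{G}$-measurable subspace. Unconditional expectation: $\varepsilon(X):=\inf_{c\in\mathbb{K}}\|X-c\|_\infty$ and $\mathbb{E}[X]:=\{c\in\mathbb{K}:\|X-c\|_\infty=\varepsilon(X)\}$. For a non-negative real random variable $S$, $\operatorname{ess\,sup}\{S\mid\mathcal{G}\}:=\sup_{p\ge1}\mathbb{E}[S^p\mid\mathcal{G}]^{1/p}$ (usual real conditional expectation), $\|X\|_\mathcal{G}:=\operatorname{ess\,sup}\{|X|\mid\mathcal{G}\}$, and $\mathbb{E}[X\mid\mathcal{G}]:=\{Y\in L^\infty(\mathcal{G}): \|X-Y\|_\mathcal{G}\le\|X-Z\|_\mathcal{G}\text{ a.s. for all }Z\in L^\infty(\mathcal{G})\}$. *)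

theory Defs
  imports "HOL-Probability.Probability"
begin

text \<open>A non-archimedean absolute value on a field, making it a local field:
  non-trivial (non-discrete), and locally compact (the closed unit ball is
  sequentially compact for the metric induced by the absolute value; this also
  gives completeness).\<close>
definition nonarch_abs :: "('k::field \<Rightarrow> real) \<Rightarrow> bool" where
  "nonarch_abs av \<longleftrightarrow>
     (\<forall>x. av x \<ge> 0) \<and> (\<forall>x. av x = 0 \<longleftrightarrow> x = 0) \<and>
     (\<forall>x y. av (x * y) = av x * av y) \<and>
     (\<forall>x y. av (x + y) \<le> max (av x) (av y))"

definition local_field_abs :: "('k::field \<Rightarrow> real) \<Rightarrow> bool" where
  "local_field_abs av \<longleftrightarrow> nonarch_abs av \<and>
     (\<exists>x. av x \<noteq> 0 \<and> av x \<noteq> 1) \<and>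
     (\<forall>s::nat \<Rightarrow> 'k. (\<forall>n. av (s n) \<le> 1) \<longrightarrow>
        (\<exists>r l. strict_mono r \<and> av l \<le> 1 \<and> (\<lambda>n. av (s (r n) - l)) \<longlonglongrightarrow> 0))"

definition K_borel :: "('k::field \<Rightarrow> real) \<Rightarrow> 'k measure" where
  "K_borel av = sigma UNIV {{y. av (y - c) < r} | c r. True}"

text \<open>Essentially bounded K-valued random variables that are measurable w.r.t. N
  (N = M gives L^\<infinity>, N = G gives L^\<infinity>(G)); boundedness is almost sure w.r.t. M.\<close>
definition Linf :: "('k::field \<Rightarrow> real) \<Rightarrow> 'a measure \<Rightarrow> 'a measure \<Rightarrow> ('a \<Rightarrow> 'k) set" where
  "Linf av M N = {X. X \<in> N \<rightarrow>\<^sub>M K_borel av \<and> (\<exists>C. AE \<omega> in M. av (X \<omega>) \<le> C)}"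

definition norm_inf :: "('k::field \<Rightarrow> real) \<Rightarrow> 'a measure \<Rightarrow> ('a \<Rightarrow> 'k) \<Rightarrow> ereal" where
  "norm_inf av M X = esssup M (\<lambda>\<omega>. ereal (av (X \<omega>)))"

definition eps_uncond :: "('k::field \<Rightarrow> real) \<Rightarrow> 'a measure \<Rightarrow> ('a \<Rightarrow> 'k) \<Rightarrow> ereal" where
  "eps_uncond av M X = (INF c. norm_inf av M (\<lambda>\<omega>. X \<omega> - c))"

definition uncond_exp :: "('k::field \<Rightarrow> real) \<Rightarrow> 'a measure \<Rightarrow> ('a \<Rightarrow> 'k) \<Rightarrow> 'k set" where
  "uncond_exp av M X = {c. norm_inf av M (\<lambda>\<omega>. X \<omega> - c) = eps_uncond av M X}"

definition cond_esssup :: "'a measure \<Rightarrow> 'a measure \<Rightarrow> ('a \<Rightarrow> real) \<Rightarrow> 'a \<Rightarrow> ereal" where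
  "cond_esssup M G S = (\<lambda>\<omega>. SUP p\<in>{1::nat..}.
      ereal (real_cond_exp M G (\<lambda>x. S x ^ p) \<omega> powr (1 / real p)))"

definition cond_norm :: "('k::field \<Rightarrow> real) \<Rightarrow> 'a measure \<Rightarrow> 'a measure \<Rightarrow> ('a \<Rightarrow> 'k) \<Rightarrow> 'a \<Rightarrow> ereal" where
  "cond_norm av M G X = cond_esssup M G (\<lambda>\<omega>. av (X \<omega>))"

definition cond_exp_set :: "('k::field \<Rightarrow> real) \<Rightarrow> 'a measure \<Rightarrow> 'a measure \<Rightarrow> ('a \<Rightarrow> 'k) \<Rightarrow> ('a \<Rightarrow> 'k) set" where
  "cond_exp_set av M G X = {Y \<in> Linf av M G. \<forall>Z \<in> Linf av M G.
      AE \<omega> in M. cond_norm av M G (\<lambda>x. X x - Y x) \<omega> \<le> cond_norm av M G (\<lambda>x. X x - Z x) \<omega>}"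

definition indep_of :: "('k::field \<Rightarrow> real) \<Rightarrow> 'a measure \<Rightarrow> ('a \<Rightarrow> 'k) \<Rightarrow> 'a measure \<Rightarrow> bool" where
  "indep_of av M X G \<longleftrightarrow> (\<forall>A \<in> sets G. \<forall>B \<in> sets (K_borel av).
      measure M (A \<inter> (X -` B \<inter> space M)) = measure M A * measure M (X -` B \<inter> space M))"

end

theory Submission
  imports Defs
begin

context
  fixes av :: "'k::field \<Rightarrow> real"
  assumes na: "nonarch_abs av"
begin

lemma av_nonneg: "av x \<ge> 0" using na unfolding nonarch_abs_def by auto
lemma av_zero_iff: "av x = 0 \<longleftrightarrow> x = 0" using na unfolding nonarch_abs_def by auto
lemma av_mult: "av (x * y) = av x * av y" using na unfolding nonarch_abs_def by auto
lemma av_ultra: "av (x + y) \<le> max (av x) (av y)" using na unfolding nonarch_abs_def by auto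

lemma av_one: "av 1 = 1"
proof -
  have "av 1 = av 1 * av 1" using av_mult[of 1 1] by simp
  moreover have "av 1 \<noteq> 0" by (metis av_zero_iff one_neq_zero)
  ultimately show ?thesis by (metis mult_cancel_right1)
qed

lemma av_minus: "av (- x) = av x"
proof -
  have "av (-1) * av (-1) = 1" using av_mult[of "-1" "-1"] av_one by simp
  then have "(av (-1) - 1) * (av (-1) + 1) = 0" by (simp add: algebra_simps)
  moreover have "av (-1) + 1 \<noteq> 0" using av_nonneg[of "-1"] by simp
  ultimately have "av (-1) = 1" by simp
  then show ?thesis using av_mult[of "-1" x] by simp
qed

lemma av_sub_comm: "av (x - y) = av (y - x)"
  using av_minus[of "x - y"] by simp

lemma av_tri: "av (x - z) \<le> max (av (x - y)) (av (y - z))"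
  using av_ultra[of "x - y" "y - z"] by simp

lemma av_strict: "av a < av b \<Longrightarrow> av (a + b) = av b"
proof -
  assume h: "av a < av b"
  have "av (a + b) \<le> av b" using av_ultra[of a b] h by simp
  moreover have "av b \<le> max (av (a + b)) (av (- a))" using av_ultra[of "a + b" "- a"] by simp
  ultimately show ?thesis using h av_minus[of a] by auto
qed

lemma av_strict2: "av (y - d) < r \<Longrightarrow> r \<le> av (x - d) \<Longrightarrow> av (x - y) = av (x - d)"
proof -
  assume "av (y - d) < r" "r \<le> av (x - d)"
  then have "av (d - y) < av (x - d)" using av_sub_comm[of y d] by simp
  from av_strict[OF this] show ?thesis by (simp add: algebra_simps)
qed

lemma av_power: "av (x ^ n) = av x ^ n"
  by (induction n) (simp_all add: av_one av_mult)

lemma av_inverse: "av (inverse x) = inverse (av x)"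
proof (cases "x = 0")
  case True then show ?thesis using av_zero_iff[of 0] by simp
next
  case False
  then have "av x * av (inverse x) = 1" using av_mult[of x "inverse x"] av_one by simp
  moreover have "av x \<noteq> 0" using False av_zero_iff by simp
  ultimately show ?thesis by (simp add: field_simps)
qed

lemma av_divide: "av (x / y) = av x / av y"
  by (simp add: divide_inverse av_mult av_inverse)

end

lemma lf_na: "local_field_abs av \<Longrightarrow> nonarch_abs av"
  unfolding local_field_abs_def by simp

context
  fixes av :: "'k::field \<Rightarrow> real"
  assumes lf: "local_field_abs av"
begin

lemma na: "nonarch_abs av" using lf_na[OF lf] .

lemma seqcomp: fixes s :: "nat \<Rightarrow> 'k" assumes "\<forall>n. av (s n) \<le> 1" shows
   "\<exists>r l. strict_mono r \<and> av l \<le> 1 \<and> (\<lambda>n. av (s (r n) - l)) \<longlonglongrightarrow> 0"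
proof -
  have "\<forall>s::nat \<Rightarrow> 'k. (\<forall>n. av (s n) \<le> 1) \<longrightarrow>
        (\<exists>r l. strict_mono r \<and> av l \<le> 1 \<and> (\<lambda>n. av (s (r n) - l)) \<longlonglongrightarrow> 0)"
    using lf unfolding local_field_abs_def by (elim conjE)
  note spec[OF this, of s]
  then show ?thesis using assms by (rule mp)
qed

lemma tb_unit:
  assumes s: "s > 0"
  shows "\<exists>F. finite F \<and> (\<forall>y. av y \<le> 1 \<longrightarrow> (\<exists>d\<in>F. av (y - d) < s))"
proof (rule ccontr)
  assume "\<not> ?thesis"
  then have H: "\<And>F. finite F \<Longrightarrow> \<exists>y. av y \<le> 1 \<and> (\<forall>d\<in>F. s \<le> av (y - d))"
    by (auto simp: not_less)
  define P where "P = (\<lambda>l y. av y \<le> 1 \<and> (\<forall>d\<in>set l. s \<le> av (y - d)))"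
  define g where "g = rec_nat [] (\<lambda>n l. (SOME y. P l y) # l)"
  have g0: "g 0 = []" and gS: "\<And>n. g (Suc n) = (SOME y. P (g n) y) # g n"
    unfolding g_def by simp_all
  define sq where "sq n = (SOME y. P (g n) y)" for n
  have Psq: "P (g n) (sq n)" for n
  proof -
    have "\<exists>y. P (g n) y" using H[of "set (g n)"] unfolding P_def by simp
    then show ?thesis unfolding sq_def by (rule someI_ex)
  qed
  have setg: "set (g n) = sq ` {..<n}" for n
    by (induction n) (auto simp: g0 gS sq_def lessThan_Suc)
  have sep: "m < n \<Longrightarrow> s \<le> av (sq n - sq m)" for m n
    using Psq[of n] setg[of n] unfolding P_def by auto
  have "\<forall>n. av (sq n) \<le> 1" using Psq unfolding P_def by simp
  from seqcomp[OF this] obtain r l where r: "strict_mono r" and lim: "(\<lambda>n. av (sq (r n) - l)) \<longlonglongrightarrow> 0"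
    by blast
  from lim s have "eventually (\<lambda>n. av (sq (r n) - l) < s) sequentially"
    by (auto dest: order_tendstoD(2))
  then obtain N where N: "\<And>n. n \<ge> N \<Longrightarrow> av (sq (r n) - l) < s"
    by (auto simp: eventually_sequentially)
  have "av (sq (r (Suc N)) - sq (r N)) \<le> max (av (sq (r (Suc N)) - l)) (av (l - sq (r N)))"
    using av_tri[OF na] by blast
  also have "\<dots> < s" using N[of N] N[of "Suc N"] av_sub_comm[OF na, of l "sq (r N)"] by simp
  finally have "av (sq (r (Suc N)) - sq (r N)) < s" .
  moreover have "s \<le> av (sq (r (Suc N)) - sq (r N))"
    using sep r by (simp add: strict_mono_def)
  ultimately show False by simp
qed

lemma exists_big: "\<exists>p. av p > 1"
proof -
  obtain x where x: "av x \<noteq> 0" "av x \<noteq> 1" using lf unfolding local_field_abs_def by blast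
  show ?thesis
  proof (cases "av x > 1")
    case True then show ?thesis by blast
  next
    case False
    then have "av x < 1" "av x > 0" using x av_nonneg[OF na, of x] by auto
    then have "av (inverse x) > 1" using av_inverse[OF na, of x] by (simp add: one_less_inverse)
    then show ?thesis by blast
  qed
qed

lemma cover_ball:
  assumes s: "s > 0"
  shows "\<exists>F. finite F \<and> (\<forall>y. av y \<le> R \<longrightarrow> (\<exists>d\<in>F. av (y - d) < s))"
proof -
  obtain p where p: "av p > 1" using exists_big by blast
  obtain N where N: "R < av p ^ N" using real_arch_pow[OF p] by blast
  define \<rho> where "\<rho> = av p ^ N"
  have rho: "\<rho> > 0" unfolding \<rho>_def using p by simp
  have pN: "av (p ^ N) = \<rho>" unfolding \<rho>_def by (rule av_power[OF na])
  have pN0: "p ^ N \<noteq> 0" using pN rho av_zero_iff[OF na, of "p ^ N"] by auto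
  obtain F0 where F0: "finite F0" "\<And>y. av y \<le> 1 \<Longrightarrow> \<exists>d\<in>F0. av (y - d) < s / \<rho>"
    using tb_unit[of "s / \<rho>"] s rho by auto
  show ?thesis
  proof (intro exI[of _ "(\<lambda>d. p ^ N * d) ` F0"] conjI allI impI)
    show "finite ((\<lambda>d. p ^ N * d) ` F0)" using F0 by simp
    fix y assume y: "av y \<le> R"
    have "av (y / p ^ N) \<le> 1" using y N rho unfolding av_divide[OF na] pN \<rho>_def by simp
    then obtain d where d: "d \<in> F0" "av (y / p ^ N - d) < s / \<rho>" using F0 by blast
    have "y - p ^ N * d = p ^ N * (y / p ^ N - d)" using pN0 by (simp add: field_simps)
    then have "av (y - p ^ N * d) = \<rho> * av (y / p ^ N - d)" using av_mult[OF na] pN by simp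
    also have "\<dots> < s" using d rho by (simp add: field_simps)
    finally show "\<exists>d'\<in>(\<lambda>d. p ^ N * d) ` F0. av (y - d') < s" using d by blast
  qed
qed

lemma separable:
  assumes s: "s > 0"
  shows "\<exists>D. countable D \<and> (\<forall>y. \<exists>d\<in>D. av (y - d) < s)"
proof -
  have "\<forall>n::nat. \<exists>F. finite F \<and> (\<forall>y. av y \<le> real n \<longrightarrow> (\<exists>d\<in>F. av (y - d) < s))"
    using cover_ball[OF s] by blast
  then obtain F where F: "\<And>n. finite (F n)" "\<And>n y. av y \<le> real n \<Longrightarrow> \<exists>d\<in>F n. av (y - d) < s"
    by metis
  show ?thesis
  proof (intro exI[of _ "\<Union>n. F n"] conjI allI)
    show "countable (\<Union>n. F n)" using F(1) by (simp add: countable_finite)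
    fix y
    obtain n :: nat where "av y \<le> real n" using real_arch_simple by blast
    then show "\<exists>d\<in>\<Union>n. F n. av (y - d) < s" using F(2) by blast
  qed
qed


lemma space_K: "space (K_borel av) = UNIV"
  unfolding K_borel_def by simp

lemma ball_in: "{y. av (y - c) < r} \<in> sets (K_borel av)"
  unfolding K_borel_def by (subst sets_measure_of) (auto intro: sigma_sets.Basic)

lemma meas_av1:
  assumes f: "f \<in> N \<rightarrow>\<^sub>M K_borel av"
  shows "(\<lambda>\<omega>. av (f \<omega> - c)) \<in> borel_measurable N"
  unfolding borel_measurable_iff_less
proof
  fix a
  have "{w \<in> space N. av (f w - c) < a} = f -` {y. av (y - c) < a} \<inter> space N" by auto
  also have "\<dots> \<in> sets N" using measurable_sets[OF f ball_in] .
  finally show "{w \<in> space N. av (f w - c) < a} \<in> sets N" .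
qed

lemma meas_av2:
  assumes f: "f \<in> N \<rightarrow>\<^sub>M K_borel av" and g: "g \<in> N \<rightarrow>\<^sub>M K_borel av"
  shows "(\<lambda>\<omega>. av (f \<omega> - g \<omega>)) \<in> borel_measurable N"
  unfolding borel_measurable_iff_less
proof
  fix a :: real
  show "{w \<in> space N. av (f w - g w) < a} \<in> sets N"
  proof (cases "a > 0")
    case False
    then have e0: "{w \<in> space N. av (f w - g w) < a} = {}" using av_nonneg[OF na] by (auto simp: not_less intro: order.trans)
    show ?thesis unfolding e0 by simp
  next
    case True
    obtain D where D: "countable D" "\<And>y. \<exists>d\<in>D. av (y - d) < a" using separable[OF True] by blast
    have eq: "{w \<in> space N. av (f w - g w) < a} =
      (\<Union>d\<in>D. {w \<in> space N. av (f w - d) < a} \<inter> {w \<in> space N. av (g w - d) < a})"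
    proof safe
      fix w assume w: "w \<in> space N" "av (f w - g w) < a"
      obtain d where d: "d \<in> D" "av (g w - d) < a" using D(2) by blast
      have "av (f w - d) \<le> max (av (f w - g w)) (av (g w - d))" by (rule av_tri[OF na])
      then show "w \<in> (\<Union>d\<in>D. {w \<in> space N. av (f w - d) < a} \<inter> {w \<in> space N. av (g w - d) < a})"
        using w d by (intro UN_I[of d]) auto
    next
      fix w d assume "w \<in> space N" "av (f w - d) < a" "av (g w - d) < a"
      moreover have "av (f w - g w) \<le> max (av (f w - d)) (av (d - g w))" by (rule av_tri[OF na])
      ultimately show "av (f w - g w) < a" using av_sub_comm[OF na, of d "g w"] by auto
    qed
    have m1: "{w \<in> space N. av (f w - d) < a} \<in> sets N" for d
      using meas_av1[OF f, of d] unfolding borel_measurable_iff_less by blast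
    have m2: "{w \<in> space N. av (g w - d) < a} \<in> sets N" for d
      using meas_av1[OF g, of d] unfolding borel_measurable_iff_less by blast
    show ?thesis unfolding eq using D(1) m1 m2 by (intro sets.countable_UN'') auto
  qed
qed

end

lemma AE_ex: "emeasure M (space M) \<noteq> 0 \<Longrightarrow> AE x in M. P x \<Longrightarrow> \<exists>x\<in>space M. P x"
proof (rule ccontr)
  assume h: "emeasure M (space M) \<noteq> 0" "AE x in M. P x" "\<not> (\<exists>x\<in>space M. P x)"
  have "AE x in M. False" using h(2) by (rule AE_mp) (use h(3) in auto)
  then have "ae_filter M = bot" by (simp add: trivial_limit_def)
  then show False using h(1) ae_filter_eq_bot_iff by blast
qed

locale setting =
  fixes av :: "'k::field \<Rightarrow> real" and M G :: "'a measure" and X :: "'a \<Rightarrow> 'k"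
  assumes lf: "local_field_abs av"
    and ps: "prob_space M"
    and sub: "subalgebra M G"
    and XL: "X \<in> Linf av M M"
    and ind: "indep_of av M X G"
begin

sublocale prob_space M by (rule ps)

lemma naa: "nonarch_abs av" by (rule lf_na[OF lf])

lemma Xm: "X \<in> M \<rightarrow>\<^sub>M K_borel av" using XL unfolding Linf_def by simp

lemma space_ne: "emeasure M (space M) \<noteq> 0" by (simp add: emeasure_space_1)

abbreviation "phi y \<equiv> norm_inf av M (\<lambda>\<omega>. X \<omega> - y)"

lemma phi_meas: "(\<lambda>\<omega>. ereal (av (X \<omega> - y))) \<in> borel_measurable M"
  using meas_av1[OF lf Xm, of y] by measurable

lemma phi_AE: "AE \<omega> in M. ereal (av (X \<omega> - y)) \<le> phi y"
  unfolding norm_inf_def by (rule esssup_AE)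

lemma phi_le: "AE \<omega> in M. ereal (av (X \<omega> - y)) \<le> z \<Longrightarrow> phi y \<le> z"
  unfolding norm_inf_def using phi_meas by (rule esssup_I)

lemma phi_ge: "AE \<omega> in M. z \<le> ereal (av (X \<omega> - y)) \<Longrightarrow> z \<le> phi y"
proof -
  assume "AE \<omega> in M. z \<le> ereal (av (X \<omega> - y))"
  then have "esssup M (\<lambda>\<omega>. z) \<le> phi y" unfolding norm_inf_def by (intro esssup_AE_mono) auto
  then show ?thesis using esssup_const[OF space_ne, of z] by simp
qed

lemma phi_nonneg: "0 \<le> phi y"
  by (rule phi_ge) (simp add: av_nonneg[OF naa])

lemma phi_ultra: "phi c \<le> max (phi y) (ereal (av (y - c)))"
proof (rule phi_le)
  show "AE \<omega> in M. ereal (av (X \<omega> - c)) \<le> max (phi y) (ereal (av (y - c)))"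
    using phi_AE[of y]
  proof eventually_elim
    case (elim \<omega>)
    have "av (X \<omega> - c) \<le> max (av (X \<omega> - y)) (av (y - c))" by (rule av_tri[OF naa])
    then have "ereal (av (X \<omega> - c)) \<le> max (ereal (av (X \<omega> - y))) (ereal (av (y - c)))"
      by (simp add: max_def split: if_splits)
    also have "\<dots> \<le> max (phi y) (ereal (av (y - c)))" by (rule max.mono) (use elim in auto)
    finally show ?case .
  qed
qed


lemma CX: "\<exists>C. AE \<omega> in M. av (X \<omega>) \<le> C" using XL unfolding Linf_def by simp

definition "e0 = real_of_ereal (eps_uncond av M X)"

lemma eps_nonneg: "0 \<le> eps_uncond av M X"
  unfolding eps_uncond_def by (rule INF_greatest) (rule phi_nonneg)

lemma eps_fin: "eps_uncond av M X = ereal e0" "0 \<le> e0"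
proof -
  obtain C where C: "AE \<omega> in M. av (X \<omega>) \<le> C" using CX by blast
  have "phi 0 \<le> ereal C" by (rule phi_le) (use C in auto)
  moreover have "eps_uncond av M X \<le> phi 0" unfolding eps_uncond_def by (rule INF_lower) simp
  ultimately have "eps_uncond av M X \<le> ereal C" by simp
  then show "eps_uncond av M X = ereal e0" "0 \<le> e0" using eps_nonneg unfolding e0_def
    by (cases "eps_uncond av M X"; simp)+
qed

lemma exists_min: "\<exists>c. phi c = eps_uncond av M X"
proof -
  obtain CX where C: "AE \<omega> in M. av (X \<omega>) \<le> CX" using CX by blast
  have "\<forall>n::nat. \<exists>y. phi y < ereal (e0 + 1 / Suc n)"
  proof
    fix n :: nat
    have "eps_uncond av M X < ereal (e0 + 1 / Suc n)" using eps_fin by simp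
    then show "\<exists>y. phi y < ereal (e0 + 1 / Suc n)" unfolding eps_uncond_def INF_less_iff by blast
  qed
  then obtain ys where ys: "\<And>n. phi (ys n) < ereal (e0 + 1 / Suc n)" by metis
  define R where "R = max (e0 + 1) CX"
  have bd: "av (ys n) \<le> R" for n
  proof -
    have "AE \<omega> in M. ereal (av (X \<omega> - ys n)) \<le> phi (ys n) \<and> av (X \<omega>) \<le> CX"
      using phi_AE[of "ys n"] C by eventually_elim simp
    then obtain \<omega> where w: "ereal (av (X \<omega> - ys n)) \<le> phi (ys n)" "av (X \<omega>) \<le> CX"
      using AE_ex[OF space_ne] by blast
    have "ereal (av (X \<omega> - ys n)) < ereal (e0 + 1 / Suc n)" by (rule order_le_less_trans[OF w(1) ys[of n]])
    then have "av (X \<omega> - ys n) \<le> e0 + 1"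
      by (simp add: divide_le_eq_1) (smt (verit) of_nat_0_le_iff of_nat_Suc divide_le_eq_1)
    moreover have "av (0 - ys n) \<le> max (av (0 - X \<omega>)) (av (X \<omega> - ys n))" by (rule av_tri[OF naa])
    ultimately show ?thesis using w(2) av_minus[OF naa] unfolding R_def by auto
  qed
  obtain p where p: "av p > 1" using exists_big[OF lf] by blast
  obtain N where N: "R < av p ^ N" using real_arch_pow[OF p] by blast
  define \<rho> where "\<rho> = av p ^ N"
  have rho: "\<rho> > 0" unfolding \<rho>_def using p by simp
  have pN: "av (p ^ N) = \<rho>" unfolding \<rho>_def by (rule av_power[OF naa])
  have pN0: "p ^ N \<noteq> 0" using pN rho av_zero_iff[OF naa, of "p ^ N"] by auto
  define sq where "sq n = ys n / p ^ N" for n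
  have "\<forall>n. av (sq n) \<le> 1"
    using bd N rho unfolding sq_def av_divide[OF naa] pN \<rho>_def by (simp; meson le_less_trans less_imp_le)
  from seqcomp[OF lf this] obtain \<sigma> l where sig: "strict_mono \<sigma>"
    and lim: "(\<lambda>n. av (sq (\<sigma> n) - l)) \<longlonglongrightarrow> 0" by blast
  define c where "c = p ^ N * l"
  have eqd: "av (ys (\<sigma> n) - c) = \<rho> * av (sq (\<sigma> n) - l)" for n
  proof -
    have "ys (\<sigma> n) - c = p ^ N * (sq (\<sigma> n) - l)" unfolding c_def sq_def using pN0 by (simp add: field_simps)
    then show ?thesis using av_mult[OF naa] pN by simp
  qed
  have lim2: "(\<lambda>n. av (ys (\<sigma> n) - c)) \<longlonglongrightarrow> 0"
    unfolding eqd using tendsto_mult_right_zero[OF lim, of \<rho>] .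
  have "phi c \<le> eps_uncond av M X"
  proof (rule ereal_le_epsilon2)
    fix \<epsilon> :: real assume eps: "0 < \<epsilon>"
    have ev1: "eventually (\<lambda>n. av (ys (\<sigma> n) - c) < \<epsilon>) sequentially"
      using lim2 eps by (auto dest: order_tendstoD(2))
    have ev2: "eventually (\<lambda>n. 1 / real (Suc n) < \<epsilon>) sequentially"
      using LIMSEQ_inverse_real_of_nat eps by (auto dest: order_tendstoD(2) simp: inverse_eq_divide)
    obtain n where n: "av (ys (\<sigma> n) - c) < \<epsilon>" "1 / real (Suc n) < \<epsilon>"
    proof -
      from eventually_conj[OF ev1 ev2] obtain N0 where "\<And>n. n \<ge> N0 \<Longrightarrow> av (ys (\<sigma> n) - c) < \<epsilon> \<and> 1 / real (Suc n) < \<epsilon>"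
        unfolding eventually_sequentially by blast
      then show ?thesis using that by blast
    qed
    have "1 / real (Suc (\<sigma> n)) \<le> 1 / real (Suc n)"
      using seq_suble[OF sig, of n] by (simp add: frac_le)
    then have "phi (ys (\<sigma> n)) \<le> ereal (e0 + \<epsilon>)" using ys[of "\<sigma> n"] n(2)
      by (smt (verit, best) ereal_less_eq(3) less_imp_le order_less_le_trans)
    moreover have "ereal (av (ys (\<sigma> n) - c)) \<le> ereal (e0 + \<epsilon>)" using n(1) eps_fin(2) by simp
    ultimately have "max (phi (ys (\<sigma> n))) (ereal (av (ys (\<sigma> n) - c))) \<le> ereal (e0 + \<epsilon>)" by simp
    then have "phi c \<le> ereal (e0 + \<epsilon>)" using phi_ultra[of c "ys (\<sigma> n)"] by (rule order.trans[rotated])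
    then show "phi c \<le> eps_uncond av M X + ereal \<epsilon>" using eps_fin by simp
  qed
  moreover have "eps_uncond av M X \<le> phi c" unfolding eps_uncond_def by (rule INF_lower) simp
  ultimately show ?thesis by (intro exI[of _ c]) simp
qed


definition "c0 = (SOME c. phi c = eps_uncond av M X)"

lemma c0: "phi c0 = ereal e0"
  unfolding c0_def using someI_ex[OF exists_min] eps_fin by simp

lemma AEc0: "AE \<omega> in M. av (X \<omega> - c0) \<le> e0"
  using phi_AE[of c0] unfolding c0 by simp

lemma uncond_iff: "y \<in> uncond_exp av M X \<longleftrightarrow> av (y - c0) \<le> e0"
proof
  assume "y \<in> uncond_exp av M X"
  then have "phi y = ereal e0" unfolding uncond_exp_def using eps_fin by simp
  then have "AE \<omega> in M. av (X \<omega> - y) \<le> e0" using phi_AE[of y] by simp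
  then have "AE \<omega> in M. av (X \<omega> - y) \<le> e0 \<and> av (X \<omega> - c0) \<le> e0" using AEc0 by eventually_elim simp
  then obtain \<omega> where w: "av (X \<omega> - y) \<le> e0" "av (X \<omega> - c0) \<le> e0" using AE_ex[OF space_ne] by blast
  have "av (y - c0) \<le> max (av (y - X \<omega>)) (av (X \<omega> - c0))" by (rule av_tri[OF naa])
  then show "av (y - c0) \<le> e0" using w av_sub_comm[OF naa, of y "X \<omega>"] by simp
next
  assume h: "av (y - c0) \<le> e0"
  have "phi y \<le> max (phi c0) (ereal (av (c0 - y)))" by (rule phi_ultra)
  also have "\<dots> \<le> ereal e0" using h c0 av_sub_comm[OF naa, of c0 y] by simp
  finally have "phi y \<le> eps_uncond av M X" using eps_fin by simp
  moreover have "eps_uncond av M X \<le> phi y" unfolding eps_uncond_def by (rule INF_lower) simp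
  ultimately show "y \<in> uncond_exp av M X" unfolding uncond_exp_def by simp
qed

lemma sfs: "sigma_finite_subalgebra M G"
proof -
  have "finite_measure_subalgebra M G"
    by (intro finite_measure_subalgebra.intro finite_measure_subalgebra_axioms.intro finite_measure_axioms sub)
  then show ?thesis by (rule finite_measure_subalgebra_is_sigma_finite)
qed

lemma LG_M: "Z \<in> Linf av M G \<Longrightarrow> Z \<in> M \<rightarrow>\<^sub>M K_borel av"
  unfolding Linf_def using measurable_from_subalg[OF sub] by blast

lemma pow_root: "0 \<le> x \<Longrightarrow> p \<ge> 1 \<Longrightarrow> (x ^ p) powr (1 / real p) = (x::real)"
proof -
  assume x: "0 \<le> x" and p: "p \<ge> 1"
  have "x ^ p = x powr real p" using powr_realpow'[OF x, of p] p by simp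
  then show ?thesis using p x by (simp add: powr_powr)
qed

lemma fZ_meas: "Z \<in> Linf av M G \<Longrightarrow> (\<lambda>\<omega>. av (X \<omega> - Z \<omega>) ^ p) \<in> borel_measurable M"
  using meas_av2[OF lf Xm LG_M] by measurable

lemma fZ_int: "Z \<in> Linf av M G \<Longrightarrow> integrable M (\<lambda>\<omega>. av (X \<omega> - Z \<omega>) ^ p)"
proof -
  assume Z: "Z \<in> Linf av M G"
  obtain CZ where CZ: "AE \<omega> in M. av (Z \<omega>) \<le> CZ" using Z unfolding Linf_def by blast
  obtain C where C: "AE \<omega> in M. av (X \<omega>) \<le> C" using CX by blast
  show ?thesis
  proof (rule integrable_const_bound[where B="(max C CZ) ^ p"])
    show "(\<lambda>\<omega>. av (X \<omega> - Z \<omega>) ^ p) \<in> borel_measurable M" using fZ_meas[OF Z] .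
    show "AE \<omega> in M. norm (av (X \<omega> - Z \<omega>) ^ p) \<le> (max C CZ) ^ p"
      using C CZ
    proof eventually_elim
      case (elim \<omega>)
      have "av (X \<omega> - Z \<omega>) \<le> max (av (X \<omega> - 0)) (av (0 - Z \<omega>))" by (rule av_tri[OF naa])
      then have "av (X \<omega> - Z \<omega>) \<le> max C CZ" using elim av_minus[OF naa, of "Z \<omega>"] by auto
      then show ?case using av_nonneg[OF naa] by (simp add: power_mono)
    qed
  qed
qed

abbreviation "cn Z \<equiv> cond_norm av M G (\<lambda>x. X x - Z x)"

lemma cn_eq: "cn Z \<omega> = (SUP p\<in>{1::nat..}. ereal (real_cond_exp M G (\<lambda>x. av (X x - Z x) ^ p) \<omega> powr (1 / real p)))"
  unfolding cond_norm_def cond_esssup_def by simp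

lemma cn_upper:
  assumes Z: "Z \<in> Linf av M G" and b: "AE \<omega> in M. av (X \<omega> - Z \<omega>) \<le> e0"
  shows "AE \<omega> in M. cn Z \<omega> \<le> ereal e0"
proof -
  have "AE \<omega> in M. \<forall>p::nat. 0 \<le> real_cond_exp M G (\<lambda>x. av (X x - Z x) ^ p) \<omega> \<and>
        real_cond_exp M G (\<lambda>x. av (X x - Z x) ^ p) \<omega> \<le> e0 ^ p"
  proof (subst AE_all_countable, intro allI)
    fix p :: nat
    have "AE \<omega> in M. 0 \<le> real_cond_exp M G (\<lambda>x. av (X x - Z x) ^ p) \<omega>"
      by (rule sigma_finite_subalgebra.real_cond_exp_pos[OF sfs]) (auto simp: av_nonneg[OF naa] fZ_meas[OF Z])
    moreover have "AE \<omega> in M. real_cond_exp M G (\<lambda>x. av (X x - Z x) ^ p) \<omega> \<le> e0 ^ p"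
      by (rule sigma_finite_subalgebra.real_cond_exp_le_c[OF sfs fZ_int[OF Z]])
         (use b in \<open>eventually_elim, simp add: power_mono av_nonneg[OF naa]\<close>)
    ultimately show "AE \<omega> in M. 0 \<le> real_cond_exp M G (\<lambda>x. av (X x - Z x) ^ p) \<omega> \<and>
        real_cond_exp M G (\<lambda>x. av (X x - Z x) ^ p) \<omega> \<le> e0 ^ p" by eventually_elim simp
  qed
  then show ?thesis
  proof eventually_elim
    case (elim \<omega>)
    show ?case unfolding cn_eq
    proof (rule SUP_least)
      fix p :: nat assume p: "p \<in> {1..}"
      have "real_cond_exp M G (\<lambda>x. av (X x - Z x) ^ p) \<omega> powr (1 / real p) \<le> (e0 ^ p) powr (1 / real p)"
        using elim by (intro powr_mono2) auto
      also have "\<dots> = e0" using pow_root[OF eps_fin(2)] p by simp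
      finally show "ereal (real_cond_exp M G (\<lambda>x. av (X x - Z x) ^ p) \<omega> powr (1 / real p)) \<le> ereal e0" by simp
    qed
  qed
qed


lemma cn_nonneg: "0 \<le> cn Z \<omega>"
  unfolding cn_eq by (rule SUP_upper2[of 1]) auto

lemma cn_ge_p: "p \<ge> 1 \<Longrightarrow> ereal (real_cond_exp M G (\<lambda>x. av (X x - Z x) ^ p) \<omega> powr (1 / real p)) \<le> cn Z \<omega>"
  unfolding cn_eq by (rule SUP_upper) simp

lemma cn_lower1:
  assumes Y: "Y \<in> Linf av M G"
  shows "AE \<omega> in M. e0 < av (Y \<omega> - c0) \<longrightarrow> ereal (av (Y \<omega> - c0)) \<le> cn Y \<omega>"
proof -
  have YG: "Y \<in> G \<rightarrow>\<^sub>M K_borel av" using Y unfolding Linf_def by simp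
  have [measurable]: "(\<lambda>\<omega>. av (Y \<omega> - c0)) \<in> borel_measurable G" using meas_av1[OF lf YG] .
  define g where "g \<omega> = (if e0 < av (Y \<omega> - c0) then av (Y \<omega> - c0) else 0)" for \<omega>
  have gG: "g \<in> borel_measurable G" unfolding g_def by measurable
  have gM: "g \<in> borel_measurable M" using measurable_from_subalg[OF sub gG] .
  obtain CY where CY: "AE \<omega> in M. av (Y \<omega>) \<le> CY" using Y unfolding Linf_def by blast
  have gI: "integrable M g"
  proof (rule integrable_const_bound[where B="max CY (av c0)"])
    show "g \<in> borel_measurable M" by (rule gM)
    show "AE \<omega> in M. norm (g \<omega>) \<le> max CY (av c0)"
      using CY
    proof eventually_elim
      case (elim \<omega>)
      have "av (Y \<omega> - c0) \<le> max (av (Y \<omega> - 0)) (av (0 - c0))" by (rule av_tri[OF naa])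
      then have "av (Y \<omega> - c0) \<le> max CY (av c0)" using elim av_minus[OF naa, of c0] by auto
      then show ?case unfolding g_def using av_nonneg[OF naa] av_nonneg[OF naa, of c0] eps_fin(2) by (auto simp: le_max_iff_disj)
    qed
  qed
  have le: "AE \<omega> in M. g \<omega> \<le> av (X \<omega> - Y \<omega>) ^ 1"
    using AEc0
  proof eventually_elim
    case (elim \<omega>)
    show ?case
    proof (cases "e0 < av (Y \<omega> - c0)")
      case True
      then have "av (X \<omega> - c0) < av (Y \<omega> - c0)" using elim by simp
      then have "av (Y \<omega> - X \<omega>) = av (Y \<omega> - c0)" by (rule av_strict2[OF naa]) simp
      then show ?thesis unfolding g_def using True av_sub_comm[OF naa, of "Y \<omega>" "X \<omega>"] by simp
    next
      case False then show ?thesis unfolding g_def using av_nonneg[OF naa] by simp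
    qed
  qed
  have m: "AE \<omega> in M. real_cond_exp M G g \<omega> \<le> real_cond_exp M G (\<lambda>x. av (X x - Y x) ^ 1) \<omega>"
    by (rule sigma_finite_subalgebra.real_cond_exp_mono[OF sfs le gI fZ_int[OF Y]])
  have f: "AE \<omega> in M. real_cond_exp M G g \<omega> = g \<omega>"
    by (rule sigma_finite_subalgebra.real_cond_exp_F_meas[OF sfs gI gG])
  from m f show ?thesis
  proof eventually_elim
    case (elim \<omega>)
    show ?case
    proof
      assume h: "e0 < av (Y \<omega> - c0)"
      then have ge: "av (Y \<omega> - c0) \<le> real_cond_exp M G (\<lambda>x. av (X x - Y x) ^ 1) \<omega>"
        using elim unfolding g_def by simp
      then have "real_cond_exp M G (\<lambda>x. av (X x - Y x) ^ 1) \<omega> powr (1 / real (1::nat))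
          = real_cond_exp M G (\<lambda>x. av (X x - Y x) ^ 1) \<omega>"
        using av_nonneg[OF naa, of "Y \<omega> - c0"] by (simp add: powr_one)
      then have "ereal (av (Y \<omega> - c0)) \<le> ereal (real_cond_exp M G (\<lambda>x. av (X x - Y x) ^ 1) \<omega> powr (1 / real (1::nat)))"
        using ge by simp
      also have "\<dots> \<le> cn Y \<omega>" by (rule cn_ge_p) simp
      finally show "ereal (av (Y \<omega> - c0)) \<le> cn Y \<omega>" .
    qed
  qed
qed

lemma const_LG: "(\<lambda>\<omega>. c) \<in> Linf av M G"
  unfolding Linf_def by (auto intro!: measurable_const simp: space_K[OF lf])

lemma subset1:
  assumes Y: "Y \<in> cond_exp_set av M G X"
  shows "Y \<in> Linf av M G" "AE \<omega> in M. Y \<omega> \<in> uncond_exp av M X"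
proof -
  show YL: "Y \<in> Linf av M G" using Y unfolding cond_exp_set_def by simp
  have "\<forall>Z\<in>Linf av M G. AE \<omega> in M. cn Y \<omega> \<le> cn Z \<omega>"
    using Y unfolding cond_exp_set_def by blast
  from this[rule_format, OF const_LG[of c0]]
  have cmp: "AE \<omega> in M. cn Y \<omega> \<le> cn (\<lambda>\<omega>. c0) \<omega>" by simp
  have up: "AE \<omega> in M. cn (\<lambda>\<omega>. c0) \<omega> \<le> ereal e0"
    by (rule cn_upper[OF const_LG AEc0])
  from cmp up cn_lower1[OF YL] show "AE \<omega> in M. Y \<omega> \<in> uncond_exp av M X"
  proof eventually_elim
    case (elim \<omega>)
    show ?case unfolding uncond_iff
    proof (rule ccontr)
      assume "\<not> av (Y \<omega> - c0) \<le> e0"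
      then have "e0 < av (Y \<omega> - c0)" by simp
      moreover from this have "ereal (av (Y \<omega> - c0)) \<le> ereal e0" using elim by (meson order.trans)
      ultimately show False by simp
    qed
  qed
qed


lemma sets_GM: "A \<in> sets G \<Longrightarrow> A \<in> sets M"
  using sub unfolding subalgebra_def by blast

lemma indep_ce:
  assumes B: "B \<in> sets (K_borel av)"
  shows "AE \<omega> in M. real_cond_exp M G (\<lambda>x. indicator B (X x)) \<omega> = prob (X -` B \<inter> space M)"
proof (rule sigma_finite_subalgebra.real_cond_exp_charact[OF sfs])
  have XB: "X -` B \<inter> space M \<in> sets M" using measurable_sets[OF Xm B] .
  have im: "(\<lambda>x. indicator B (X x) :: real) \<in> borel_measurable M"
    using Xm B by measurable
  show "integrable M (\<lambda>x. indicator B (X x) :: real)"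
    by (rule integrable_const_bound[where B=1]) (auto simp: im)
  show "integrable M (\<lambda>x. prob (X -` B \<inter> space M))" by simp
  show "(\<lambda>x. prob (X -` B \<inter> space M)) \<in> borel_measurable G" by simp
  fix A assume A: "A \<in> sets G"
  have AM: "A \<in> sets M" by (rule sets_GM[OF A])
  have "(\<integral>x\<in>A. indicator B (X x) \<partial>M) = integral\<^sup>L M (indicator (A \<inter> X -` B))"
    unfolding set_lebesgue_integral_def by (intro Bochner_Integration.integral_cong) (auto simp: indicator_def)
  also have "\<dots> = measure M (A \<inter> (X -` B \<inter> space M))" by (simp add: Int_assoc)
  also have "\<dots> = measure M A * prob (X -` B \<inter> space M)"
    using ind A B unfolding indep_of_def by blast
  also have "\<dots> = (\<integral>x\<in>A. prob (X -` B \<inter> space M) \<partial>M)"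
    using set_integral_const[OF AM, of "prob (X -` B \<inter> space M)"] by (simp add: emeasure_eq_measure)
  finally show "(\<integral>x\<in>A. indicator B (X x) \<partial>M) = (\<integral>x\<in>A. prob (X -` B \<inter> space M) \<partial>M)" .
qed


lemma lower_d:
  assumes Z: "Z \<in> Linf av M G" and r0: "0 < r0" and rr: "r0 < r" and re: "r < e0"
  shows "AE \<omega> in M. av (Z \<omega> - d) < r \<longrightarrow> ereal r0 \<le> cn Z \<omega>"
proof -
  define B where "B = {y. r \<le> av (y - d)}"
  have Beq: "B = space (K_borel av) - {y. av (y - d) < r}" unfolding B_def space_K[OF lf] by auto
  have B: "B \<in> sets (K_borel av)" unfolding Beq by (rule sets.compl_sets) (rule ball_in[OF lf])
  define q where "q = prob (X -` B \<inter> space M)"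
  have XB: "X -` B \<inter> space M \<in> sets M" using measurable_sets[OF Xm B] .
  have qpos: "q > 0"
  proof (rule ccontr)
    assume "\<not> q > 0"
    then have "q = 0" unfolding q_def using measure_nonneg[of M] by (meson antisym not_less)
    then have "X -` B \<inter> space M \<in> null_sets M" using XB unfolding q_def
      by (intro null_setsI) (auto simp: emeasure_eq_measure)
    then have "AE \<omega> in M. \<omega> \<notin> X -` B \<inter> space M" by (rule AE_not_in)
    from this AE_space have "AE \<omega> in M. ereal (av (X \<omega> - d)) \<le> ereal r"
      by eventually_elim (auto simp: B_def)
    then have "phi d \<le> ereal r" by (rule phi_le)
    moreover have "eps_uncond av M X \<le> phi d" unfolding eps_uncond_def by (rule INF_lower) simp
    ultimately have "ereal e0 \<le> ereal r" using eps_fin(1) by (metis order.trans)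
    then show False using re by simp
  qed
  define t where "t = r0 / r"
  have t: "0 < t" "t < 1" unfolding t_def using r0 rr by auto
  obtain n where n: "t ^ n < q" using real_arch_pow_inv[OF qpos t(2)] by blast
  define p where "p = Suc n"
  have p1: "p \<ge> 1" unfolding p_def by simp
  have tp: "t ^ p < q" unfolding p_def using n t by (smt (verit) mult_left_le_one_le power_Suc zero_le_power)
  have rpos: "r > 0" using r0 rr by simp
  have ZG: "Z \<in> G \<rightarrow>\<^sub>M K_borel av" using Z unfolding Linf_def by simp
  have [measurable]: "(\<lambda>\<omega>. av (Z \<omega> - d)) \<in> borel_measurable G" using meas_av1[OF lf ZG] .
  define fA where "fA \<omega> = (if av (Z \<omega> - d) < r then 1 else (0::real))" for \<omega>
  have fAG: "fA \<in> borel_measurable G" unfolding fA_def by measurable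
  have fAM: "fA \<in> borel_measurable M" using measurable_from_subalg[OF sub fAG] .
  define gB where "gB x = r ^ p * indicator B (X x)" for x
  have im: "(\<lambda>x. indicator B (X x) :: real) \<in> borel_measurable M"
    using Xm B by measurable
  have iI: "integrable M (\<lambda>x. indicator B (X x) :: real)"
    by (rule integrable_const_bound[where B=1]) (auto simp: im)
  have gBM: "gB \<in> borel_measurable M" unfolding gB_def using im by measurable
  have gBI: "integrable M gB" unfolding gB_def using iI by simp
  have prodI: "integrable M (\<lambda>x. fA x * gB x)"
  proof (rule integrable_const_bound[where B="r ^ p"])
    show "AE x in M. norm (fA x * gB x) \<le> r ^ p" using rpos by (auto simp: fA_def gB_def indicator_def)
    show "(\<lambda>x. fA x * gB x) \<in> borel_measurable M" using fAM gBM by measurable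
  qed
  have pw: "fA x * gB x \<le> av (X x - Z x) ^ p" for x
  proof (cases "av (Z x - d) < r \<and> r \<le> av (X x - d)")
    case True
    then have "av (X x - Z x) = av (X x - d)" using av_strict2[OF naa] by blast
    then have "r \<le> av (X x - Z x)" using True by simp
    then have "r ^ p \<le> av (X x - Z x) ^ p" using rpos by (intro power_mono) auto
    then show ?thesis using True unfolding fA_def gB_def B_def by simp
  next
    case False
    then have "fA x * gB x = 0" unfolding fA_def gB_def B_def by auto
    then show ?thesis using zero_le_power[OF av_nonneg[OF naa, of "X x - Z x"], of p] by linarith
  qed
  have a1: "AE \<omega> in M. real_cond_exp M G (\<lambda>x. fA x * gB x) \<omega> \<le> real_cond_exp M G (\<lambda>x. av (X x - Z x) ^ p) \<omega>"
    by (rule sigma_finite_subalgebra.real_cond_exp_mono[OF sfs _ prodI fZ_int[OF Z]]) (use pw in auto)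
  have a2: "AE \<omega> in M. real_cond_exp M G (\<lambda>x. fA x * gB x) \<omega> = fA \<omega> * real_cond_exp M G gB \<omega>"
    by (rule sigma_finite_subalgebra.real_cond_exp_mult[OF sfs fAG gBM prodI])
  have a3: "AE \<omega> in M. real_cond_exp M G gB \<omega> = r ^ p * real_cond_exp M G (\<lambda>x. indicator B (X x)) \<omega>"
    unfolding gB_def by (rule sigma_finite_subalgebra.real_cond_exp_cmult[OF sfs iI])
  have a4: "AE \<omega> in M. real_cond_exp M G (\<lambda>x. indicator B (X x)) \<omega> = q"
    unfolding q_def by (rule indep_ce[OF B])
  from a1 a2 a3 a4 show ?thesis
  proof eventually_elim
    case (elim \<omega>)
    show ?case
    proof
      assume h: "av (Z \<omega> - d) < r"
      then have ge: "r ^ p * q \<le> real_cond_exp M G (\<lambda>x. av (X x - Z x) ^ p) \<omega>"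
        using elim unfolding fA_def by simp
      have "r0 ^ p = r ^ p * t ^ p" unfolding t_def using rpos by (simp add: power_divide)
      also have "\<dots> \<le> r ^ p * q" using tp rpos by simp
      finally have ge2: "r0 ^ p \<le> real_cond_exp M G (\<lambda>x. av (X x - Z x) ^ p) \<omega>" using ge by simp
      have "r0 = (r0 ^ p) powr (1 / real p)" using pow_root[OF _ p1, of r0] r0 by simp
      also have "\<dots> \<le> real_cond_exp M G (\<lambda>x. av (X x - Z x) ^ p) \<omega> powr (1 / real p)"
        using ge2 r0 by (intro powr_mono2) auto
      finally have "ereal r0 \<le> ereal (real_cond_exp M G (\<lambda>x. av (X x - Z x) ^ p) \<omega> powr (1 / real p))" by simp
      also have "\<dots> \<le> cn Z \<omega>" by (rule cn_ge_p[OF p1])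
      finally show "ereal r0 \<le> cn Z \<omega>" .
    qed
  qed
qed


lemma cn_lower2:
  assumes Z: "Z \<in> Linf av M G"
  shows "AE \<omega> in M. ereal e0 \<le> cn Z \<omega>"
proof (cases "e0 = 0")
  case True
  show ?thesis
  proof (rule AE_I2)
    fix \<omega> show "ereal e0 \<le> cn Z \<omega>" using cn_nonneg[of Z \<omega>] True by (simp add: zero_ereal_def)
  qed
next
  case False
  then have e0: "e0 > 0" using eps_fin(2) by simp
  define r0 where "r0 n = e0 - e0 / real (Suc (Suc n))" for n
  have r0: "0 < r0 n" "r0 n < e0" for n
    unfolding r0_def using e0 by (auto simp: field_simps add_pos_nonneg)
  have each: "AE \<omega> in M. ereal (r0 n) \<le> cn Z \<omega>" for n
  proof -
    define r where "r = (r0 n + e0) / 2"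
    have rr: "r0 n < r" "r < e0" "0 < r" unfolding r_def using r0[of n] by auto
    obtain D where D: "countable D" "\<And>y. \<exists>d\<in>D. av (y - d) < r" using separable[OF lf rr(3)] by blast
    have "AE \<omega> in M. \<forall>d\<in>D. av (Z \<omega> - d) < r \<longrightarrow> ereal (r0 n) \<le> cn Z \<omega>"
      using D(1) lower_d[OF Z r0(1) rr(1) rr(2)] by (subst AE_ball_countable) auto
    then show ?thesis
    proof eventually_elim
      case (elim \<omega>)
      obtain d where "d \<in> D" "av (Z \<omega> - d) < r" using D(2) by blast
      then show ?case using elim by blast
    qed
  qed
  have "AE \<omega> in M. \<forall>n. ereal (r0 n) \<le> cn Z \<omega>" using each by (subst AE_all_countable) auto
  then show ?thesis
  proof eventually_elim
    case (elim \<omega>)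
    show ?case
    proof (rule ccontr)
      assume "\<not> ereal e0 \<le> cn Z \<omega>"
      then have lt: "cn Z \<omega> < ereal e0" by simp
      then obtain v where v: "cn Z \<omega> = ereal v" using cn_nonneg[of Z \<omega>] by (cases "cn Z \<omega>") auto
      then have ve: "v < e0" using lt by simp
      obtain n :: nat where n: "e0 / (e0 - v) < real n" using reals_Archimedean2 by blast
      have "e0 / real (Suc (Suc n)) < e0 - v"
      proof -
        have "e0 < real n * (e0 - v)" using n ve by (simp add: field_simps)
        also have "\<dots> \<le> real (Suc (Suc n)) * (e0 - v)" using ve by (intro mult_right_mono) auto
        finally show ?thesis by (simp add: field_simps)
      qed
      then have "v < r0 n" unfolding r0_def by simp
      moreover have "r0 n \<le> v" using elim[rule_format, of n] v by simp
      ultimately show False by simp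
    qed
  qed
qed

end

theorem mainTheorem11:
  fixes av :: "'k::field \<Rightarrow> real" and M G :: "'a measure" and X :: "'a \<Rightarrow> 'k"
  assumes "local_field_abs av"
    and "prob_space M"
    and "subalgebra M G"
    and "X \<in> Linf av M M"
    and "indep_of av M X G"
  shows "cond_exp_set av M G X = {Y \<in> Linf av M G. AE \<omega> in M. Y \<omega> \<in> uncond_exp av M X}"
proof -
  interpret setting av M G X by (rule setting.intro[OF assms])
  show ?thesis
  proof (intro set_eqI iffI)
    fix Y assume "Y \<in> cond_exp_set av M G X"
    then show "Y \<in> {Y \<in> Linf av M G. AE \<omega> in M. Y \<omega> \<in> uncond_exp av M X}" using subset1 by blast
  next
    fix Y assume "Y \<in> {Y \<in> Linf av M G. AE \<omega> in M. Y \<omega> \<in> uncond_exp av M X}"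
    then have YL: "Y \<in> Linf av M G" and YE: "AE \<omega> in M. Y \<omega> \<in> uncond_exp av M X" by auto
    have "AE \<omega> in M. av (X \<omega> - Y \<omega>) \<le> e0"
      using YE AEc0
    proof eventually_elim
      case (elim \<omega>)
      have "av (X \<omega> - Y \<omega>) \<le> max (av (X \<omega> - c0)) (av (c0 - Y \<omega>))" by (rule av_tri[OF naa])
      then show ?case using elim uncond_iff av_sub_comm[OF naa, of c0 "Y \<omega>"] by auto
    qed
    then have up: "AE \<omega> in M. cn Y \<omega> \<le> ereal e0" by (rule cn_upper[OF YL])
    have "\<forall>Z\<in>Linf av M G. AE \<omega> in M. cn Y \<omega> \<le> cn Z \<omega>"
    proof
      fix Z assume Z: "Z \<in> Linf av M G"
      from up cn_lower2[OF Z] show "AE \<omega> in M. cn Y \<omega> \<le> cn Z \<omega>"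
        by eventually_elim (rule order.trans)
    qed
    then show "Y \<in> cond_exp_set av M G X" unfolding cond_exp_set_def using YL by blast
  qed
qed

end
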